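(* Let $k\ge 2$ and $n\ge 1$ be integers and let $1\le M\le kn-1$. Then the probability of selecting an item of highest rank (rank $n$) using the strategy $\mathcal{S}^+(n,k;M)$ is \[ P_{n,k}(\mathcal{S}^+(n,k;M))=\sum_{j=1}^{n-1}\sum_{l=1}^k \frac{\binom Ml(k)_l\,(k(j-1))_{M-l}}{(kn)_M}\cdot\frac 1{n-j}. \]
   Context: Fix integers $k\ge2$, $n\ge1$. There are $kn$ items, $k$ items at each of the ranks $1,2,\dots,n$ (rank $n$ is highest). The items are revealed one at a time in a uniformly random order, i.e. the sequence of ranks is a uniformly random permutation of the multiset $\{1^k,2^k,\dots,n^k\}$; $P_{n,k}$ denotes this uniform probability. For $M\in\{1,\dots,kn-1\}$, the strategy $\mathcal{S}^+(n,k;M)$ lets the first $M$ items pass and then selects the first later-arriving item whose rank is strictly greater than the highest rank among the first $M$ items (if such an item exists; otherwise nothing is selected). $P_{n,k}(\mathcal{S}^+(n,k;M))$ denotes the probability that this strategy selects an item of rank $n$. Notation: $(b)_a=b(b-1)\cdots(b-a+1)$ is the falling factorial for nonnegative integers $a,b$, with $(b)_0=1$ (so $(b)_a=0$ if $a>b$). *)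

theory Defs
  imports Complex_Main "HOL-Combinatorics.Multiset_Permutations"
begin

text \<open>Falling factorial (b)_a = b(b-1)...(b-a+1), with (b)_0 = 1 and (b)_a = 0 if a > b.\<close>
definition falling :: "nat \<Rightarrow> nat \<Rightarrow> nat" where
  "falling b a = (\<Prod>i<a. b - i)"

definition rank_mset :: "nat \<Rightarrow> nat \<Rightarrow> nat multiset" where
  "rank_mset n k = (\<Sum>r\<in>{1..n}. replicate_mset k r)"

text \<open>Strategy S+(n,k;M) applied to a sequence of ranks xs (0-indexed):
  let the first M items pass; select the first later item (index i \<ge> M) whose rank
  exceeds the maximum of the first M ranks.\<close>
definition selects_top :: "nat \<Rightarrow> nat \<Rightarrow> nat list \<Rightarrow> bool" where
  "selects_top n M xs =
     (let m = Max (set (take M xs)) in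
      \<exists>i. M \<le> i \<and> i < length xs \<and> xs ! i > m \<and>
          (\<forall>j. M \<le> j \<and> j < i \<longrightarrow> xs ! j \<le> m) \<and> xs ! i = n)"

definition prob_S_plus :: "nat \<Rightarrow> nat \<Rightarrow> nat \<Rightarrow> real" where
  "prob_S_plus n k M =
     real (card {xs \<in> permutations_of_multiset (rank_mset n k). selects_top n M xs})
     / real (card (permutations_of_multiset (rank_mset n k)))"

end

theory Submission
  imports Defs
begin

lemma card_perm_cons:
  assumes "A \<noteq> {#}"
  shows "card {xs \<in> permutations_of_multiset A. Q xs} =
     (\<Sum>x\<in>set_mset A. card {ys \<in> permutations_of_multiset (A - {#x#}). Q (x#ys)})"
proof -
  have "{xs \<in> permutations_of_multiset A. Q xs} =
     (\<Union>x\<in>set_mset A. (#) x ` {ys \<in> permutations_of_multiset (A - {#x#}). Q (x#ys)})"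
    by (subst permutations_of_multiset_nonempty[OF assms]) auto
  also have "card \<dots> = (\<Sum>x\<in>set_mset A. card ((#) x ` {ys \<in> permutations_of_multiset (A - {#x#}). Q (x#ys)}))"
    by (rule card_UN_disjoint) auto
  also have "\<dots> = (\<Sum>x\<in>set_mset A. card {ys \<in> permutations_of_multiset (A - {#x#}). Q (x#ys)})"
    by (intro sum.cong refl card_image) (auto simp: inj_on_def)
  finally show ?thesis .
qed

lemma falling_Suc: "falling b (Suc a) = b * falling (b - 1) a"
  unfolding falling_def by (subst prod.lessThan_Suc_shift) (simp add: diff_diff_add)

lemma size_filter_sum: "size (filter_mset P (B::'a multiset)) = (\<Sum>x\<in>{x\<in>set_mset B. P x}. count B x)"
  by (metis (mono_tags, lifting) count_eq_zero_iff count_filter_mset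
    set_mset_filter size_multiset_overloaded_eq sum.cong)

lemma size_filter_remove:
  assumes "x \<in># B" "P x"
  shows "size (filter_mset P (B - {#x#})) = size (filter_mset P B) - 1"
proof -
  have "filter_mset P (B - {#x#}) = filter_mset P B - {#x#}"
    using assms by (intro multiset_eqI) auto
  moreover have "x \<in># filter_mset P B" using assms by simp
  ultimately show ?thesis by (simp add: size_Diff_submset)
qed

lemma prefix_count:
  fixes B :: "'a multiset"
  shows "m \<le> size B \<Longrightarrow> card {xs \<in> permutations_of_multiset B. set (take m xs) \<subseteq> U} * falling (size B) m
     = card (permutations_of_multiset B) * falling (size (filter_mset (\<lambda>x. x \<in> U) B)) m"
proof (induction m arbitrary: B)
  case 0
  then show ?case by (simp add: falling_def)
next
  case (Suc m)
  define c where "c = size (filter_mset (\<lambda>x. x \<in> U) B)"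
  define T where "T = (\<lambda>B::'a multiset. card (permutations_of_multiset B))"
  have ne: "B \<noteq> {#}" using Suc.prems by auto
  have "card {xs \<in> permutations_of_multiset B. set (take (Suc m) xs) \<subseteq> U} =
     (\<Sum>x\<in>set_mset B. card {ys \<in> permutations_of_multiset (B - {#x#}). set (take (Suc m) (x#ys)) \<subseteq> U})"
    by (rule card_perm_cons[OF ne])
  also have "\<dots> = (\<Sum>x\<in>set_mset B. if x \<in> U then card {ys \<in> permutations_of_multiset (B - {#x#}). set (take m ys) \<subseteq> U} else 0)"
    by (intro sum.cong refl) auto
  finally have e1: "card {xs \<in> permutations_of_multiset B. set (take (Suc m) xs) \<subseteq> U} = \<dots>" .
  have e2: "(if x \<in> U then card {ys \<in> permutations_of_multiset (B - {#x#}). set (take m ys) \<subseteq> U} else 0)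
       * falling (size B) (Suc m) = (if x \<in> U then T B * count B x * falling (c - 1) m else 0)"
    if x: "x \<in> set_mset B" for x
  proof (cases "x \<in> U")
    case True
    have sz: "size (B - {#x#}) = size B - 1" using x by (simp add: size_Diff_submset)
    have IH: "card {ys \<in> permutations_of_multiset (B - {#x#}). set (take m ys) \<subseteq> U} * falling (size B - 1) m
       = T (B - {#x#}) * falling (c - 1) m"
      using Suc.IH[of "B - {#x#}"] Suc.prems sz size_filter_remove[OF x, of "\<lambda>x. x \<in> U"] True
      unfolding T_def c_def by simp
    have rm: "T B * count B x = size B * T (B - {#x#})"
      unfolding T_def by (rule card_permutations_of_multiset_remove_aux) (use x in simp)
    show ?thesis using True IH rm by (simp add: falling_Suc algebra_simps)
  qed simp
  have "card {xs \<in> permutations_of_multiset B. set (take (Suc m) xs) \<subseteq> U} * falling (size B) (Suc m)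
     = (\<Sum>x\<in>set_mset B. if x \<in> U then T B * count B x * falling (c - 1) m else 0)"
    unfolding e1 sum_distrib_right using e2 by (intro sum.cong refl) auto
  also have "\<dots> = T B * falling (c - 1) m * (\<Sum>x\<in>{x\<in>set_mset B. x \<in> U}. count B x)"
    by (simp add: sum.If_cases sum_distrib_left algebra_simps Collect_conj_eq Int_commute)
  also have "\<dots> = T B * falling c (Suc m)"
    by (simp add: c_def size_filter_sum falling_Suc)
  finally show ?case unfolding T_def c_def .
qed

lemma count_rank: "count (rank_mset n k) x = (if 1 \<le> x \<and> x \<le> n then k else 0)"
  unfolding rank_mset_def by (simp add: count_sum)

lemma size_rank: "size (rank_mset n k) = k * n"
  unfolding rank_mset_def by simp

lemma set_rank: "k \<ge> 1 \<Longrightarrow> set_mset (rank_mset n k) = {1..n}"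
  by (auto simp: count_rank simp flip: count_greater_zero_iff split: if_splits)

lemma filter_rank: "j \<le> n \<Longrightarrow> filter_mset (\<lambda>x. x \<in> {..j}) (rank_mset n k) = rank_mset j k"
  by (intro multiset_eqI) (auto simp: count_rank)

definition sw :: "nat \<Rightarrow> nat \<Rightarrow> nat \<Rightarrow> nat" where
  "sw r n x = (if x = r then n else if x = n then r else x)"

lemma sw_sw [simp]: "sw r n (sw r n x) = x"
  by (simp add: sw_def)

lemma inj_sw: "inj (sw r n)"
  by (metis injI sw_sw)

lemma image_rank_sw:
  assumes "1 \<le> r" "r \<le> n"
  shows "image_mset (sw r n) (rank_mset n k) = rank_mset n k"
proof (rule multiset_eqI)
  fix x
  have "sw r n y = x \<longleftrightarrow> y = sw r n x" for y by (metis sw_sw)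
  hence "sw r n -` {x} = {sw r n x}" by auto
  hence "count (image_mset (sw r n) (rank_mset n k)) x = count (rank_mset n k) (sw r n x)"
    by (auto simp: count_image_mset Int_insert_left not_in_iff)
  also have "\<dots> = count (rank_mset n k) x" using assms by (auto simp: count_rank sw_def)
  finally show "count (image_mset (sw r n) (rank_mset n k)) x = count (rank_mset n k) x" .
qed

lemma first_hd:
  "(\<exists>i<length xs. P (xs!i) \<and> (\<forall>i'<i. \<not> P (xs!i')) \<and> xs!i = v) \<longleftrightarrow> (filter P xs \<noteq> [] \<and> hd (filter P xs) = v)"
proof (induction xs)
  case Nil
  then show ?case by simp
next
  case (Cons a xs)
  show ?case
  proof (cases "P a")
    case True
    have "(\<exists>i<length (a#xs). P ((a#xs)!i) \<and> (\<forall>i'<i. \<not> P ((a#xs)!i')) \<and> (a#xs)!i = v) \<longleftrightarrow> a = v"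
    proof
      assume "\<exists>i<length (a#xs). P ((a#xs)!i) \<and> (\<forall>i'<i. \<not> P ((a#xs)!i')) \<and> (a#xs)!i = v"
      then obtain i where i: "i<length (a#xs)" "P ((a#xs)!i)" "\<forall>i'<i. \<not> P ((a#xs)!i')" "(a#xs)!i = v" by blast
      have "i = 0" using i(3) True by (cases i) auto
      then show "a = v" using i by simp
    next
      assume "a = v" then show "\<exists>i<length (a#xs). P ((a#xs)!i) \<and> (\<forall>i'<i. \<not> P ((a#xs)!i')) \<and> (a#xs)!i = v"
        using True by (intro exI[of _ 0]) auto
    qed
    then show ?thesis using True by simp
  next
    case False
    have "(\<exists>i<length (a#xs). P ((a#xs)!i) \<and> (\<forall>i'<i. \<not> P ((a#xs)!i')) \<and> (a#xs)!i = v) \<longleftrightarrow>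
          (\<exists>i<length xs. P (xs!i) \<and> (\<forall>i'<i. \<not> P (xs!i')) \<and> xs!i = v)"
    proof
      assume "\<exists>i<length (a#xs). P ((a#xs)!i) \<and> (\<forall>i'<i. \<not> P ((a#xs)!i')) \<and> (a#xs)!i = v"
      then obtain i where i: "i<length (a#xs)" "P ((a#xs)!i)" "\<forall>i'<i. \<not> P ((a#xs)!i')" "(a#xs)!i = v" by blast
      obtain i0 where i0: "i = Suc i0" using i(2) False by (cases i) auto
      show "\<exists>i<length xs. P (xs!i) \<and> (\<forall>i'<i. \<not> P (xs!i')) \<and> xs!i = v"
      proof (intro exI[of _ i0] conjI allI impI)
        fix i' assume "i' < i0" then show "\<not> P (xs!i')" using i(3)[rule_format, of "Suc i'"] i0 by simp
      qed (use i i0 in auto)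
    next
      assume "\<exists>i<length xs. P (xs!i) \<and> (\<forall>i'<i. \<not> P (xs!i')) \<and> xs!i = v"
      then obtain i where i: "i<length xs" "P (xs!i)" "\<forall>i'<i. \<not> P (xs!i')" "xs!i = v" by blast
      show "\<exists>i<length (a#xs). P ((a#xs)!i) \<and> (\<forall>i'<i. \<not> P ((a#xs)!i')) \<and> (a#xs)!i = v"
      proof (intro exI[of _ "Suc i"] conjI allI impI)
        fix i' assume "i' < Suc i" then show "\<not> P ((a#xs)!i')" using i(3) False by (cases i') auto
      qed (use i in auto)
    qed
    then show ?thesis using False Cons.IH by simp
  qed
qed

lemma falling_choose: "falling b a = (b choose a) * fact a"
proof (induction a arbitrary: b)
  case 0 then show ?case by (simp add: falling_def)
next
  case (Suc a)
  show ?case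
  proof (cases b)
    case 0 then show ?thesis by (simp add: falling_def)
  next
    case (Suc b')
    have "falling b (Suc a) = b * ((b' choose a) * fact a)" using Suc.IH Suc by (simp add: falling_Suc)
    also have "\<dots> = (Suc b' * (b' choose a)) * fact a" by (simp only: Suc mult.assoc)
    also have "\<dots> = (b choose Suc a) * Suc a * fact a" by (simp only: Suc Suc_times_binomial_eq)
    also have "\<dots> = (b choose Suc a) * fact (Suc a)" by (simp only: mult.assoc fact_Suc of_nat_id)
    finally show ?thesis .
  qed
qed

lemma falling_0 [simp]: "falling b 0 = 1"
  by (simp add: falling_def)

lemma falling_zero: "a > b \<Longrightarrow> falling b a = 0"
  by (simp add: falling_choose)

lemma vand_falling:
  "falling K M + (\<Sum>l=1..k. (M choose l) * falling k l * falling K (M - l)) = falling (k + K) M"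
proof -
  define t where "t l = (M choose l) * falling k l * falling K (M - l)" for l
  have t1: "t l = fact M * ((k choose l) * (K choose (M - l)))" if "l \<le> M" for l
  proof -
    have "t l = (fact l * fact (M - l) * (M choose l)) * ((k choose l) * (K choose (M - l)))"
      unfolding t_def falling_choose by (simp add: algebra_simps)
    then show ?thesis using binomial_fact_lemma[OF that] by simp
  qed
  have "(\<Sum>l\<le>M. t l) = fact M * (\<Sum>l\<le>M. (k choose l) * (K choose (M - l)))"
    by (simp add: sum_distrib_left t1)
  also have "\<dots> = falling (k + K) M" by (simp add: vandermonde falling_choose)
  finally have A: "(\<Sum>l\<le>M. t l) = falling (k + K) M" .
  have B: "(\<Sum>l\<le>M. t l) = t 0 + (\<Sum>l=1..M. t l)"
    by (simp add: atMost_atLeast0 sum.atLeast_Suc_atMost)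
  have C: "(\<Sum>l=1..M. t l) = (\<Sum>l=1..M+k. t l)"
    by (rule sum.mono_neutral_left) (auto simp: t_def)
  have D: "(\<Sum>l=1..k. t l) = (\<Sum>l=1..M+k. t l)"
    by (rule sum.mono_neutral_left) (auto simp: t_def falling_zero)
  show ?thesis using A B C D by (simp add: t_def)
qed

definition F :: "nat \<Rightarrow> nat \<Rightarrow> nat \<Rightarrow> nat \<Rightarrow> nat \<Rightarrow> nat list set" where
  "F n k M j v = {xs \<in> permutations_of_multiset (rank_mset n k).
      Max (set (take M xs)) = j \<and> hd (filter (\<lambda>x. j < x) xs) = v}"

context
  fixes n k M :: nat
  assumes k1: "k \<ge> 1" and M1: "1 \<le> M" and Mlt: "M < k * n"
begin

lemma P_props:
  assumes "xs \<in> permutations_of_multiset (rank_mset n k)"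
  shows "set xs = {1..n}" "length xs = k * n" "n \<in> set xs" "take M xs \<noteq> []"
    "\<And>x. x \<in> set (take M xs) \<Longrightarrow> x \<le> Max (set (take M xs))"
    "Max (set (take M xs)) \<in> set xs"
proof -
  have m: "mset xs = rank_mset n k" using assms by (rule permutations_of_multisetD)
  show s: "set xs = {1..n}" using set_rank[OF k1] m by (metis set_mset_mset)
  show l: "length xs = k * n" using m size_rank by (metis size_mset)
  have "n \<ge> 1" using Mlt by (cases n) auto
  then show "n \<in> set xs" using s by auto
  show ne: "take M xs \<noteq> []" using l M1 Mlt by auto
  show "\<And>x. x \<in> set (take M xs) \<Longrightarrow> x \<le> Max (set (take M xs))" by simp
  show "Max (set (take M xs)) \<in> set xs" using ne by (meson Max_in List.finite_set set_empty set_take_subset subsetD)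
qed

lemma sw_step:
  assumes xs: "xs \<in> permutations_of_multiset (rank_mset n k)" and jr: "j < r" "r \<le> n"
    and mx: "Max (set (take M xs)) = j"
  shows "map (sw r n) xs \<in> permutations_of_multiset (rank_mset n k)"
    "Max (set (take M (map (sw r n) xs))) = j"
    "hd (filter (\<lambda>x. j < x) (map (sw r n) xs)) = sw r n (hd (filter (\<lambda>x. j < x) xs))"
proof -
  have m: "mset xs = rank_mset n k" using xs by (rule permutations_of_multisetD)
  show "map (sw r n) xs \<in> permutations_of_multiset (rank_mset n k)"
    using m image_rank_sw[of r n k] jr by (intro permutations_of_multisetI) simp
  have "\<forall>x\<in>set (take M xs). sw r n x = x"
  proof
    fix x assume "x \<in> set (take M xs)"
    hence "x \<le> j" using P_props(5)[OF xs] mx by auto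
    thus "sw r n x = x" using jr by (simp add: sw_def)
  qed
  hence "map (sw r n) (take M xs) = take M xs" by (simp add: map_idI)
  then show "Max (set (take M (map (sw r n) xs))) = j" using mx by (simp add: take_map)
  have "filter (\<lambda>x. j < x) (map (sw r n) xs) = map (sw r n) (filter (\<lambda>x. j < sw r n x) xs)"
    by (simp add: filter_map comp_def)
  also have "filter (\<lambda>x. j < sw r n x) xs = filter (\<lambda>x. j < x) xs"
    using jr by (intro filter_cong) (auto simp: sw_def)
  finally have fe: "filter (\<lambda>x. j < x) (map (sw r n) xs) = map (sw r n) (filter (\<lambda>x. j < x) xs)" .
  have "n \<in> set (filter (\<lambda>x. j < x) xs)" using P_props(3)[OF xs] jr by simp
  hence "filter (\<lambda>x. j < x) xs \<noteq> []" by (metis equals0D set_empty)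
  then show "hd (filter (\<lambda>x. j < x) (map (sw r n) xs)) = sw r n (hd (filter (\<lambda>x. j < x) xs))"
    unfolding fe by (simp add: hd_map)
qed

lemma sym_card:
  assumes jr: "j < r" "r \<le> n"
  shows "card (F n k M j r) = card (F n k M j n)"
proof -
  have "map (sw r n) ` F n k M j r = F n k M j n"
  proof
    show "map (sw r n) ` F n k M j r \<subseteq> F n k M j n"
      using sw_step[OF _ jr] by (auto simp: F_def sw_def)
  next
    show "F n k M j n \<subseteq> map (sw r n) ` F n k M j r"
    proof
      fix ys assume ys: "ys \<in> F n k M j n"
      then have ys': "ys \<in> permutations_of_multiset (rank_mset n k)" "Max (set (take M ys)) = j"
        "hd (filter (\<lambda>x. j < x) ys) = n" by (auto simp: F_def)
      have "map (sw r n) ys \<in> F n k M j r"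
        using sw_step[OF ys'(1) jr ys'(2)] ys'(3) by (auto simp: F_def sw_def)
      moreover have "ys = map (sw r n) (map (sw r n) ys)" by (simp add: comp_def)
      ultimately show "ys \<in> map (sw r n) ` F n k M j r" by blast
    qed
  qed
  moreover have "inj_on (map (sw r n)) (F n k M j r)"
    using inj_sw by (meson inj_mapI inj_on_subset subset_UNIV)
  ultimately show ?thesis by (metis card_image)
qed

lemma partition_card:
  assumes jn: "j < n"
  shows "card {xs \<in> permutations_of_multiset (rank_mset n k). Max (set (take M xs)) = j} = (n - j) * card (F n k M j n)"
proof -
  have eq: "{xs \<in> permutations_of_multiset (rank_mset n k). Max (set (take M xs)) = j} = (\<Union>v\<in>{j<..n}. F n k M j v)"
  proof (rule set_eqI, rule iffI)
    fix xs assume "xs \<in> {xs \<in> permutations_of_multiset (rank_mset n k). Max (set (take M xs)) = j}"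
    then have xs: "xs \<in> permutations_of_multiset (rank_mset n k)" "Max (set (take M xs)) = j" by auto
    have ne: "filter (\<lambda>x. j < x) xs \<noteq> []" using P_props(3)[OF xs(1)] jn by (auto simp: filter_empty_conv)
    then have "hd (filter (\<lambda>x. j < x) xs) \<in> set (filter (\<lambda>x. j < x) xs)" by (rule list.set_sel(1))
    then have "hd (filter (\<lambda>x. j < x) xs) \<in> {j<..n}" using P_props(1)[OF xs(1)] by auto
    then show "xs \<in> (\<Union>v\<in>{j<..n}. F n k M j v)" using xs by (auto simp: F_def)
  qed (auto simp: F_def)
  have "card (\<Union>v\<in>{j<..n}. F n k M j v) = (\<Sum>v\<in>{j<..n}. card (F n k M j v))"
    by (rule card_UN_disjoint) (auto simp: F_def)
  also have "\<dots> = (\<Sum>v\<in>{j<..n}. card (F n k M j n))"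
    by (intro sum.cong refl sym_card) auto
  finally show ?thesis using eq by simp
qed

lemma selects_iff:
  assumes xs: "xs \<in> permutations_of_multiset (rank_mset n k)"
  shows "selects_top n M xs \<longleftrightarrow>
     (filter (\<lambda>x. Max (set (take M xs)) < x) xs \<noteq> [] \<and> hd (filter (\<lambda>x. Max (set (take M xs)) < x) xs) = n)"
proof -
  define m where "m = Max (set (take M xs))"
  have pre: "xs ! i \<le> m" if "i < M" for i
  proof -
    have "i < length xs" using that P_props(2)[OF xs] Mlt by simp
    then have "xs ! i \<in> set (take M xs)" using that by (metis in_set_conv_nth length_take min_less_iff_conj nth_take)
    then show ?thesis unfolding m_def using P_props(5)[OF xs] by blast
  qed
  have "selects_top n M xs \<longleftrightarrow> (\<exists>i<length xs. m < xs!i \<and> (\<forall>i'<i. \<not> m < xs!i') \<and> xs!i = n)"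
  proof
    assume "selects_top n M xs"
    then obtain i where i: "M \<le> i" "i < length xs" "xs ! i > m" "\<forall>j. M \<le> j \<and> j < i \<longrightarrow> xs ! j \<le> m" "xs ! i = n"
      unfolding selects_top_def m_def Let_def by blast
    have "\<forall>i'<i. \<not> m < xs!i'"
    proof (intro allI impI)
      fix i' assume ii: "i' < i"
      show "\<not> m < xs!i'"
      proof (cases "i' < M")
        case True then show ?thesis using pre[of i'] by simp
      next
        case False then show ?thesis using i(4)[rule_format, of i'] ii by simp
      qed
    qed
    then show "\<exists>i<length xs. m < xs!i \<and> (\<forall>i'<i. \<not> m < xs!i') \<and> xs!i = n" using i by blast
  next
    assume "\<exists>i<length xs. m < xs!i \<and> (\<forall>i'<i. \<not> m < xs!i') \<and> xs!i = n"
    then obtain i where i: "i < length xs" "m < xs!i" "\<forall>i'<i. \<not> m < xs!i'" "xs!i = n" by blast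
    have "M \<le> i" using pre[of i] i(2) by (cases "i < M") auto
    moreover have "\<forall>j. M \<le> j \<and> j < i \<longrightarrow> xs ! j \<le> m" using i(3) by (simp add: not_less)
    ultimately show "selects_top n M xs" unfolding selects_top_def m_def[symmetric] Let_def using i by blast
  qed
  then show ?thesis unfolding first_hd m_def .
qed

lemma selects_union:
  "{xs \<in> permutations_of_multiset (rank_mset n k). selects_top n M xs} = (\<Union>j\<in>{1..n-1}. F n k M j n)"
proof (rule set_eqI, rule iffI)
  fix xs assume "xs \<in> {xs \<in> permutations_of_multiset (rank_mset n k). selects_top n M xs}"
  then have xs: "xs \<in> permutations_of_multiset (rank_mset n k)" and s: "selects_top n M xs" by auto
  define m where "m = Max (set (take M xs))"
  have f: "filter (\<lambda>x. m < x) xs \<noteq> []" "hd (filter (\<lambda>x. m < x) xs) = n"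
    using s selects_iff[OF xs] m_def by auto
  have "n \<in> set (filter (\<lambda>x. m < x) xs)" using f by (metis list.set_sel(1))
  then have "m < n" by simp
  moreover have "m \<ge> 1" using P_props(1,6)[OF xs] m_def by auto
  ultimately show "xs \<in> (\<Union>j\<in>{1..n-1}. F n k M j n)" using xs f m_def by (auto simp: F_def)
next
  fix xs assume "xs \<in> (\<Union>j\<in>{1..n-1}. F n k M j n)"
  then obtain j where j: "j \<in> {1..n-1}" "xs \<in> F n k M j n" by blast
  then have xs: "xs \<in> permutations_of_multiset (rank_mset n k)" "Max (set (take M xs)) = j"
     "hd (filter (\<lambda>x. j < x) xs) = n" by (auto simp: F_def)
  have "n \<in> set (filter (\<lambda>x. j < x) xs)" using P_props(3)[OF xs(1)] j(1) by auto
  hence "filter (\<lambda>x. j < x) xs \<noteq> []" by (metis equals0D set_empty)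
  then show "xs \<in> {xs \<in> permutations_of_multiset (rank_mset n k). selects_top n M xs}"
    using selects_iff[OF xs(1)] xs by auto
qed

lemma card_selects:
  "card {xs \<in> permutations_of_multiset (rank_mset n k). selects_top n M xs} = (\<Sum>j=1..n-1. card (F n k M j n))"
  unfolding selects_union by (rule card_UN_disjoint) (auto simp: F_def)

lemma E_count:
  assumes "j \<le> n"
  shows "card {xs \<in> permutations_of_multiset (rank_mset n k). set (take M xs) \<subseteq> {..j}} * falling (k * n) M
     = card (permutations_of_multiset (rank_mset n k)) * falling (k * j) M"
  using prefix_count[of M "rank_mset n k" "{..j}"] Mlt filter_rank[OF assms, of k]
  by (simp add: size_rank)

lemma D_eq:
  assumes "1 \<le> j"
  shows "card {xs \<in> permutations_of_multiset (rank_mset n k). Max (set (take M xs)) = j} =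
    card {xs \<in> permutations_of_multiset (rank_mset n k). set (take M xs) \<subseteq> {..j}} -
    card {xs \<in> permutations_of_multiset (rank_mset n k). set (take M xs) \<subseteq> {..j-1}}"
proof -
  let ?P = "permutations_of_multiset (rank_mset n k)"
  have "{xs \<in> ?P. Max (set (take M xs)) = j} =
     {xs \<in> ?P. set (take M xs) \<subseteq> {..j}} - {xs \<in> ?P. set (take M xs) \<subseteq> {..j-1}}"
  proof (rule set_eqI, rule iffI)
    fix xs assume "xs \<in> {xs \<in> ?P. Max (set (take M xs)) = j}"
    then have xs: "xs \<in> ?P" "Max (set (take M xs)) = j" by auto
    have "j \<in> set (take M xs)" using xs P_props(4)[OF xs(1)] by (metis Max_in List.finite_set set_empty)
    then show "xs \<in> {xs \<in> ?P. set (take M xs) \<subseteq> {..j}} - {xs \<in> ?P. set (take M xs) \<subseteq> {..j-1}}"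
      using xs P_props(5)[OF xs(1)] assms by auto
  next
    fix xs assume "xs \<in> {xs \<in> ?P. set (take M xs) \<subseteq> {..j}} - {xs \<in> ?P. set (take M xs) \<subseteq> {..j-1}}"
    then have xs: "xs \<in> ?P" "set (take M xs) \<subseteq> {..j}" "\<not> set (take M xs) \<subseteq> {..j-1}" by auto
    then obtain y where y0: "y \<in> set (take M xs)" "\<not> y \<le> j - 1" by blast
    then have y: "y \<in> set (take M xs)" "y > j - 1" by auto
    then have "y = j" using xs(2) by auto
    then have "j \<le> Max (set (take M xs))" using y by simp
    moreover have "Max (set (take M xs)) \<le> j" using xs(2) P_props(4)[OF xs(1)] by (subst Max_le_iff) auto
    ultimately show "xs \<in> {xs \<in> ?P. Max (set (take M xs)) = j}" using xs by auto
  qed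
  moreover have "{xs \<in> ?P. set (take M xs) \<subseteq> {..j-1}} \<subseteq> {xs \<in> ?P. set (take M xs) \<subseteq> {..j}}" by auto
  ultimately show ?thesis by (simp add: card_Diff_subset)
qed

end


lemma aux_diff: "(x::real) = t*a/f \<Longrightarrow> y = t*b/f \<Longrightarrow> x - y = t*(a-b)/f"
  by (simp add: diff_divide_distrib right_diff_distrib)

lemma aux_div: "(p::real) * c = t * d / f \<Longrightarrow> p > 0 \<Longrightarrow> t > 0 \<Longrightarrow> f > 0 \<Longrightarrow> c / t = d / f / p"
  by (simp add: field_simps)

theorem proposition2:
  fixes n k M :: nat
  assumes "k \<ge> 2" and "n \<ge> 1" and "1 \<le> M" and "M \<le> k * n - 1"
  shows "prob_S_plus n k M =
    (\<Sum>j=1..n-1. \<Sum>l=1..k.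
       real ((M choose l) * falling k l * falling (k * (j - 1)) (M - l))
         / real (falling (k * n) M) * (1 / real (n - j)))"
proof -
  have k1: "k \<ge> 1" and M1: "1 \<le> M" using assms by auto
  have kn: "k * n \<ge> 1" using assms by simp
  have Mlt: "M < k * n" using assms(4) kn by arith
  define P where "P = permutations_of_multiset (rank_mset n k)"
  define T where "T = card P"
  define FN where "FN = falling (k * n) M"
  have Tpos: "T > 0" unfolding T_def P_def
    by (simp add: card_gt_0_iff)
  have FNpos: "FN > 0" unfolding FN_def falling_def using Mlt by (auto intro!: prod_pos)
  define E where "E j = card {xs \<in> P. set (take M xs) \<subseteq> {..j}}" for j
  have Ej: "real (E j) = real T * real (falling (k * j) M) / real FN" if "j \<le> n" for j
  proof -
    have "E j * FN = T * falling (k * j) M"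
      using E_count[OF k1 M1 Mlt that] unfolding E_def T_def FN_def P_def .
    then have "real (E j) * real FN = real T * real (falling (k * j) M)" by (metis of_nat_mult)
    then show ?thesis using FNpos by (simp add: field_simps)
  qed
  have key: "real (card (F n k M j n)) / real T = (\<Sum>l=1..k.
       real ((M choose l) * falling k l * falling (k * (j - 1)) (M - l))
         / real FN * (1 / real (n - j)))" if j: "j \<in> {1..n-1}" for j
  proof -
    have j1: "1 \<le> j" and jn: "j < n" using j assms by auto
    have D: "(n - j) * card (F n k M j n) = E j - E (j - 1)"
      using partition_card[OF k1 M1 Mlt jn] D_eq[OF k1 M1 Mlt j1] unfolding E_def P_def by simp
    have sub: "E (j - 1) \<le> E j" unfolding E_def
      by (rule card_mono) (auto simp: P_def)
    have "real (n - j) * real (card (F n k M j n)) = real (E j) - real (E (j - 1))"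
      using D sub by (metis of_nat_diff of_nat_mult)
    also have "\<dots> = real T * (real (falling (k * j) M) - real (falling (k * (j - 1)) M)) / real FN"
      by (rule aux_diff[OF Ej[of j] Ej[of "j - 1"]]) (use jn in auto)
    finally have A: "real (card (F n k M j n)) / real T =
       (real (falling (k * j) M) - real (falling (k * (j - 1)) M)) / real FN / real (n - j)"
      by (rule aux_div) (use Tpos FNpos jn in auto)
    have kk: "k + k * (j - 1) = k * j" using j1 by (simp add: algebra_simps)
    have V: "real (\<Sum>l=1..k. (M choose l) * falling k l * falling (k * (j - 1)) (M - l))
       = real (falling (k * j) M) - real (falling (k * (j - 1)) M)"
    proof -
      have "falling (k * (j - 1)) M + (\<Sum>l=1..k. (M choose l) * falling k l * falling (k * (j - 1)) (M - l))
         = falling (k * j) M" using vand_falling[of "k * (j - 1)" M k] kk by simp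
      hence "real (falling (k * (j - 1)) M) + real (\<Sum>l=1..k. (M choose l) * falling k l * falling (k * (j - 1)) (M - l))
         = real (falling (k * j) M)" by (metis of_nat_add)
      thus ?thesis by linarith
    qed
    have "(\<Sum>l=1..k. real ((M choose l) * falling k l * falling (k * (j - 1)) (M - l))
         / real FN * (1 / real (n - j)))
       = real (\<Sum>l=1..k. (M choose l) * falling k l * falling (k * (j - 1)) (M - l)) / real FN / real (n - j)"
      by (simp add: sum_divide_distrib)
    then show ?thesis using A V by simp
  qed
  have "prob_S_plus n k M = real (\<Sum>j=1..n-1. card (F n k M j n)) / real T"
    unfolding prob_S_plus_def T_def P_def card_selects[OF k1 M1 Mlt] ..
  also have "\<dots> = (\<Sum>j=1..n-1. real (card (F n k M j n)) / real T)"
    by (simp add: sum_divide_distrib)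
  also have "\<dots> = (\<Sum>j=1..n-1. \<Sum>l=1..k.
       real ((M choose l) * falling k l * falling (k * (j - 1)) (M - l))
         / real FN * (1 / real (n - j)))"
    by (intro sum.cong refl key) 
  finally show ?thesis unfolding FN_def .
qed

end
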